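(* The group of $\mathbb{Z}$-algebra automorphisms of $B(K)$ is generated by the automorphisms $\alpha$ of the following form: for some $1\le k\le n$ and some $h\in\mathcal{G}$ not depending on $x_k$, $\alpha$ is induced by $x_k\mapsto x_k+h-2x_kh$, $x_i\mapsto x_i$ ($i\ne k$). Moreover, this automorphism group is isomorphic to the group of all permutations of the $2^n$ vertices of the $n$-dimensional Boolean cube $\{0,1\}^n$.
   Context: $K=\mathbb{Z}[x_1,\ldots,x_n]$ and $B(K)$ is the quotient of $K$ by the ideal $I$ generated by $x_i^2-x_i$, $i=1,\ldots,n$. The set $\mathcal{G}\subseteq\mathbb{Z}[x_1,\ldots,x_n]$ is defined recursively as the smallest set such that: each variable $x_1,\ldots,x_n$ belongs to $\mathcal{G}$; if $P\in\mathcal{G}$ then $1-P\in\mathcal{G}$; if $P_1,P_2\in\mathcal{G}$ then $P_1P_2\in\mathcal{G}$. *)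

theory Defs
  imports "HOL-Algebra.Algebra" "HOL-Library.Poly_Mapping"
begin

type_synonym zpoly = "(nat \<Rightarrow>\<^sub>0 nat) \<Rightarrow>\<^sub>0 int"

definition pvar :: "nat \<Rightarrow> zpoly" where
  "pvar i = Poly_Mapping.single (Poly_Mapping.single i 1) 1"

inductive_set Gset :: "nat \<Rightarrow> zpoly set" for n :: nat where
  var: "i \<in> {1..n} \<Longrightarrow> pvar i \<in> Gset n"
| compl: "P \<in> Gset n \<Longrightarrow> 1 - P \<in> Gset n"
| prod: "P1 \<in> Gset n \<Longrightarrow> P2 \<in> Gset n \<Longrightarrow> P1 * P2 \<in> Gset n"

text \<open>B(K) is represented by its standard normal form: every residue class has a
  unique multilinear representative, i.e. a Z-linear combination of the
  square-free monomials x_S = prod_{i in S} x_i, S a subset of {1..n}.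
  An element is the coefficient function S |-> coefficient of x_S,
  supported in Pow {1..n}.  Multiplication is x_S * x_T = x_(S Un T).\<close>

definition Bcarrier :: "nat \<Rightarrow> (nat set \<Rightarrow> int) set" where
  "Bcarrier n = {p. \<forall>S. p S \<noteq> 0 \<longrightarrow> S \<subseteq> {1..n}}"

definition Badd :: "(nat set \<Rightarrow> int) \<Rightarrow> (nat set \<Rightarrow> int) \<Rightarrow> (nat set \<Rightarrow> int)" where
  "Badd p q = (\<lambda>S. p S + q S)"

definition Bmult :: "(nat set \<Rightarrow> int) \<Rightarrow> (nat set \<Rightarrow> int) \<Rightarrow> (nat set \<Rightarrow> int)" where
  "Bmult p q = (\<lambda>U. \<Sum>S\<in>Pow U. \<Sum>T\<in>Pow U. if S \<union> T = U then p S * q T else 0)"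

definition Bone :: "nat set \<Rightarrow> int" where
  "Bone = (\<lambda>S. if S = {} then 1 else 0)"

definition Bvar :: "nat \<Rightarrow> (nat set \<Rightarrow> int)" where
  "Bvar k = (\<lambda>S. if S = {k} then 1 else 0)"

definition Bring :: "nat \<Rightarrow> (nat set \<Rightarrow> int) ring" where
  "Bring n = \<lparr>carrier = Bcarrier n, monoid.mult = Bmult, one = Bone,
              ring.zero = (\<lambda>_. 0), ring.add = Badd\<rparr>"

text \<open>The canonical projection K -> B(K): a monomial x^m is sent to x_S with
  S the set of variables occurring in m (since x_i^2 = x_i).\<close>

definition Bproj :: "zpoly \<Rightarrow> (nat set \<Rightarrow> int)" where
  "Bproj P = (\<lambda>S. \<Sum>m\<in>{m \<in> Poly_Mapping.keys P. Poly_Mapping.keys m = S}. Poly_Mapping.lookup P m)"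

definition Bindep :: "nat \<Rightarrow> (nat set \<Rightarrow> int) \<Rightarrow> bool" where
  "Bindep k b \<longleftrightarrow> (\<forall>S. b S \<noteq> 0 \<longrightarrow> k \<notin> S)"

text \<open>Z-algebra automorphisms of B(K) = ring automorphisms (every ring map is
  Z-linear), as extensional bijections of the carrier, under composition.\<close>

definition BAut :: "nat \<Rightarrow> ((nat set \<Rightarrow> int) \<Rightarrow> (nat set \<Rightarrow> int)) monoid" where
  "BAut n = BijGroup (Bcarrier n)
     \<lparr>carrier := ring_iso (Bring n) (Bring n) \<inter> Bij (Bcarrier n)\<rparr>"

definition BGens :: "nat \<Rightarrow> ((nat set \<Rightarrow> int) \<Rightarrow> (nat set \<Rightarrow> int)) set" where
  "BGens n = {\<alpha> \<in> carrier (BAut n). \<exists>k\<in>{1..n}. \<exists>h\<in>Gset n.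
      Bindep k (Bproj h) \<and>
      \<alpha> (Bvar k) = (\<lambda>S. Bvar k S + Bproj h S - 2 * Bmult (Bvar k) (Bproj h) S) \<and>
      (\<forall>i\<in>{1..n}. i \<noteq> k \<longrightarrow> \<alpha> (Bvar i) = Bvar i)}"

definition cube :: "nat \<Rightarrow> (nat \<Rightarrow> int) set" where
  "cube n = {1..n} \<rightarrow>\<^sub>E {0, 1}"

end

theory Submission
  imports Defs "HOL-Combinatorics.Permutations"
begin


definition setv :: "nat \<Rightarrow> (nat \<Rightarrow> int) \<Rightarrow> nat set" where
  "setv n v = {i\<in>{1..n}. v i = 1}"

definition pt :: "nat \<Rightarrow> nat set \<Rightarrow> (nat \<Rightarrow> int)" where
  "pt n A = (\<lambda>i. if i \<in> {1..n} then (if i \<in> A then 1 else 0) else undefined)"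

lemma cube_iff: "v \<in> cube n \<longleftrightarrow> (\<forall>i. (i \<in> {1..n} \<longrightarrow> v i = 0 \<or> v i = 1) \<and> (i \<notin> {1..n} \<longrightarrow> v i = undefined))"
  unfolding cube_def PiE_def Pi_def extensional_def by auto

lemma finite_cube: "finite (cube n)"
  unfolding cube_def by (simp add: finite_PiE)

lemma pt_cube: "pt n A \<in> cube n"
  unfolding cube_iff pt_def by auto

lemma setv_sub: "setv n v \<subseteq> {1..n}"
  unfolding setv_def by auto

lemma pt_setv: "v \<in> cube n \<Longrightarrow> pt n (setv n v) = v"
  unfolding cube_iff pt_def setv_def by (rule ext) (metis (mono_tags, lifting) mem_Collect_eq)

lemma setv_pt: "A \<subseteq> {1..n} \<Longrightarrow> setv n (pt n A) = A"
  unfolding pt_def setv_def by auto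

lemma cube_eqI: "v \<in> cube n \<Longrightarrow> w \<in> cube n \<Longrightarrow> setv n v = setv n w \<Longrightarrow> v = w"
  by (metis pt_setv)

lemma cube_val: "v \<in> cube n \<Longrightarrow> i \<in> {1..n} \<Longrightarrow> v i = (if i \<in> setv n v then 1 else 0)"
  unfolding cube_iff setv_def by auto

definition Fc :: "nat \<Rightarrow> ((nat \<Rightarrow> int) \<Rightarrow> int) set" where
  "Fc n = {f. \<forall>v. v \<notin> cube n \<longrightarrow> f v = 0}"

definition ev :: "nat \<Rightarrow> (nat set \<Rightarrow> int) \<Rightarrow> ((nat \<Rightarrow> int) \<Rightarrow> int)" where
  "ev n p = (\<lambda>v. if v \<in> cube n then (\<Sum>S\<in>Pow (setv n v). p S) else 0)"

definition mob :: "nat \<Rightarrow> ((nat \<Rightarrow> int) \<Rightarrow> int) \<Rightarrow> (nat set \<Rightarrow> int)" where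
  "mob n f = (\<lambda>S. if S \<subseteq> {1..n} then (\<Sum>A\<in>Pow S. (-1) ^ card (S - A) * f (pt n A)) else 0)"

lemma alt1: "finite D \<Longrightarrow> (\<Sum>Y\<in>Pow D. (-1::int) ^ card Y) = (if D = {} then 1 else 0)"
proof (induction D rule: finite_induct)
  case empty then show ?case by simp
next
  case (insert x D)
  have fin: "finite (Pow D)" using insert by simp
  have disj: "Pow D \<inter> insert x ` Pow D = {}" using insert by auto
  have inj: "inj_on (insert x) (Pow D)" unfolding inj_on_def using insert.hyps(2) by (metis PowD insert_ident subset_iff)
  have "(\<Sum>Y\<in>Pow (insert x D). (-1::int) ^ card Y) =
      (\<Sum>Y\<in>Pow D. (-1::int) ^ card Y) + (\<Sum>Y\<in>insert x ` Pow D. (-1::int) ^ card Y)"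
    unfolding Pow_insert using sum.union_disjoint[OF fin _ disj] fin by simp
  also have "(\<Sum>Y\<in>insert x ` Pow D. (-1::int) ^ card Y) = (\<Sum>Y\<in>Pow D. (-1::int) ^ card (insert x Y))"
    using sum.reindex[OF inj] by simp
  also have "\<dots> = (\<Sum>Y\<in>Pow D. - ((-1::int) ^ card Y))"
  proof (rule sum.cong)
    fix Y assume "Y \<in> Pow D"
    then have "x \<notin> Y" "finite Y" using insert finite_subset by auto
    then show "(-1::int) ^ card (insert x Y) = - ((-1::int) ^ card Y)" by simp
  qed simp
  finally show ?case by (simp add: sum_negf)
qed

lemma alt2: "finite D \<Longrightarrow> (\<Sum>Y\<in>Pow D. (-1::int) ^ card (D - Y)) = (if D = {} then 1 else 0)"
proof -
  assume f: "finite D"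
  have "(\<Sum>Y\<in>Pow D. (-1::int) ^ card (D - Y)) = (\<Sum>Y\<in>Pow D. (-1::int) ^ card Y)"
    by (rule sum.reindex_bij_witness[where i="\<lambda>Y. D - Y" and j="\<lambda>Y. D - Y"]) (auto simp: double_diff)
  then show ?thesis using alt1[OF f] by simp
qed

lemma interval_sum1:
  assumes "T \<subseteq> S" "finite S"
  shows "(\<Sum>A\<in>{A\<in>Pow S. T \<subseteq> A}. (-1::int) ^ card (S - A)) = (if T = S then 1 else 0)"
proof -
  have "(\<Sum>A\<in>{A\<in>Pow S. T \<subseteq> A}. (-1::int) ^ card (S - A)) = (\<Sum>Y\<in>Pow (S - T). (-1::int) ^ card ((S - T) - Y))"
    apply (rule sum.reindex_bij_witness[where i="\<lambda>Y. T \<union> Y" and j="\<lambda>A. A - T"])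
    subgoal by blast
    subgoal by blast
    subgoal by blast
    subgoal using assms by blast
    subgoal for a proof -
      assume "a \<in> {A\<in>Pow S. T \<subseteq> A}"
      then have "S - T - (a - T) = S - a" by blast
      then show ?thesis by simp
    qed
    done
  also have "\<dots> = (if T = S then 1 else 0)" using alt2[of "S - T"] assms by auto
  finally show ?thesis .
qed

lemma interval_sum2:
  assumes "T \<subseteq> S" "finite S"
  shows "(\<Sum>A\<in>{A\<in>Pow S. T \<subseteq> A}. (-1::int) ^ card (A - T)) = (if T = S then 1 else 0)"
proof -
  have "(\<Sum>A\<in>{A\<in>Pow S. T \<subseteq> A}. (-1::int) ^ card (A - T)) = (\<Sum>Y\<in>Pow (S - T). (-1::int) ^ card Y)"
    apply (rule sum.reindex_bij_witness[where i="\<lambda>Y. T \<union> Y" and j="\<lambda>A. A - T"])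
    subgoal by blast
    subgoal by blast
    subgoal by blast
    subgoal using assms by blast
    subgoal by simp
    done
  also have "\<dots> = (if T = S then 1 else 0)" using alt1[of "S - T"] assms by auto
  finally show ?thesis .
qed

lemma swap_pow:
  assumes "finite S"
  shows "(\<Sum>A\<in>Pow S. \<Sum>T\<in>Pow A. g A T) = (\<Sum>T\<in>Pow S. \<Sum>A\<in>{A\<in>Pow S. T \<subseteq> A}. g A T)"
proof -
  have "(\<Sum>A\<in>Pow S. \<Sum>T\<in>Pow A. g A T) = (\<Sum>A\<in>Pow S. \<Sum>T\<in>{T\<in>Pow S. T \<subseteq> A}. g A T)"
    by (rule sum.cong) (auto intro!: sum.cong)
  also have "\<dots> = (\<Sum>T\<in>Pow S. \<Sum>A\<in>{A\<in>Pow S. T \<subseteq> A}. g A T)"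
    using sum.swap_restrict[of "Pow S" "Pow S" g "\<lambda>A T. T \<subseteq> A"] assms by simp
  finally show ?thesis .
qed

lemma ev_Fc: "ev n p \<in> Fc n"
  unfolding ev_def Fc_def by auto

lemma mob_Bcarrier: "mob n f \<in> Bcarrier n"
  unfolding mob_def Bcarrier_def by auto

lemma mob_ev: assumes "p \<in> Bcarrier n" shows "mob n (ev n p) = p"
proof
  fix S
  show "mob n (ev n p) S = p S"
  proof (cases "S \<subseteq> {1..n}")
    case False then show ?thesis using assms unfolding mob_def Bcarrier_def by auto
  next
    case True
    then have fS: "finite S" using finite_subset by blast
    have e: "ev n p (pt n A) = (\<Sum>T\<in>Pow A. p T)" if "A \<in> Pow S" for A
    proof -
      have "A \<subseteq> {1..n}" using that True by blast
      then show ?thesis unfolding ev_def using pt_cube[of n A] setv_pt[of A n] by simp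
    qed
    have "mob n (ev n p) S = (\<Sum>A\<in>Pow S. (-1) ^ card (S - A) * ev n p (pt n A))"
      unfolding mob_def using True by simp
    also have "\<dots> = (\<Sum>A\<in>Pow S. \<Sum>T\<in>Pow A. (-1) ^ card (S - A) * p T)"
      by (rule sum.cong) (simp_all add: e sum_distrib_left)
    also have "\<dots> = (\<Sum>T\<in>Pow S. \<Sum>A\<in>{A\<in>Pow S. T \<subseteq> A}. (-1) ^ card (S - A) * p T)"
      by (rule swap_pow[OF fS])
    also have "\<dots> = (\<Sum>T\<in>Pow S. (if T = S then 1 else 0) * p T)"
    proof (rule sum.cong)
      fix T assume "T \<in> Pow S"
      then show "(\<Sum>A\<in>{A\<in>Pow S. T \<subseteq> A}. (-1) ^ card (S - A) * p T) = (if T = S then 1 else 0) * p T"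
        using interval_sum1[OF _ fS, of T] by (simp add: sum_distrib_right[symmetric])
    qed simp
    also have "\<dots> = (\<Sum>T\<in>Pow S. if T = S then p T else 0)" by (rule sum.cong) auto
    also have "\<dots> = p S" using fS by simp
    finally show ?thesis .
  qed
qed

lemma ev_mob: assumes "f \<in> Fc n" shows "ev n (mob n f) = f"
proof
  fix v
  show "ev n (mob n f) v = f v"
  proof (cases "v \<in> cube n")
    case False then show ?thesis using assms unfolding ev_def Fc_def by auto
  next
    case True
    define S where "S = setv n v"
    have Ssub: "S \<subseteq> {1..n}" unfolding S_def by (rule setv_sub)
    then have fS: "finite S" using finite_subset by blast
    have "ev n (mob n f) v = (\<Sum>A\<in>Pow S. mob n f A)"
      unfolding ev_def S_def using True by simp
    also have "\<dots> = (\<Sum>A\<in>Pow S. \<Sum>T\<in>Pow A. (-1) ^ card (A - T) * f (pt n T))"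
    proof (rule sum.cong)
      fix A assume "A \<in> Pow S"
      then have "A \<subseteq> {1..n}" using Ssub by blast
      then show "mob n f A = (\<Sum>T\<in>Pow A. (-1) ^ card (A - T) * f (pt n T))" unfolding mob_def by simp
    qed simp
    also have "\<dots> = (\<Sum>T\<in>Pow S. \<Sum>A\<in>{A\<in>Pow S. T \<subseteq> A}. (-1) ^ card (A - T) * f (pt n T))"
      by (rule swap_pow[OF fS])
    also have "\<dots> = (\<Sum>T\<in>Pow S. (if T = S then 1 else 0) * f (pt n T))"
    proof (rule sum.cong)
      fix T assume "T \<in> Pow S"
      then show "(\<Sum>A\<in>{A\<in>Pow S. T \<subseteq> A}. (-1) ^ card (A - T) * f (pt n T)) = (if T = S then 1 else 0) * f (pt n T)"
        using interval_sum2[OF _ fS, of T] by (simp add: sum_distrib_right[symmetric])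
    qed simp
    also have "\<dots> = (\<Sum>T\<in>Pow S. if T = S then f (pt n T) else 0)" by (rule sum.cong) auto
    also have "\<dots> = f (pt n S)" using fS by simp
    also have "\<dots> = f v" unfolding S_def using pt_setv True by simp
    finally show ?thesis .
  qed
qed



lemma Bcarrier_iff: "p \<in> Bcarrier n \<longleftrightarrow> (\<forall>S. \<not> S \<subseteq> {1..n} \<longrightarrow> p S = 0)"
  unfolding Bcarrier_def by auto

lemma Badd_closed: "p \<in> Bcarrier n \<Longrightarrow> q \<in> Bcarrier n \<Longrightarrow> Badd p q \<in> Bcarrier n"
  unfolding Bcarrier_iff Badd_def by auto

lemma Bmult_closed: "p \<in> Bcarrier n \<Longrightarrow> q \<in> Bcarrier n \<Longrightarrow> Bmult p q \<in> Bcarrier n"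
proof -
  assume p: "p \<in> Bcarrier n" and q: "q \<in> Bcarrier n"
  show ?thesis unfolding Bcarrier_iff
  proof (intro allI impI)
    fix U assume U: "\<not> U \<subseteq> {1..n}"
    have "(\<Sum>T\<in>Pow U. if S \<union> T = U then p S * q T else 0) = 0" if "S \<in> Pow U" for S
    proof (rule sum.neutral, intro ballI)
      fix T assume "T \<in> Pow U"
      show "(if S \<union> T = U then p S * q T else 0) = 0"
      proof (cases "S \<union> T = U")
        case True
        then have "\<not> S \<subseteq> {1..n} \<or> \<not> T \<subseteq> {1..n}" using U by blast
        then show ?thesis using p q unfolding Bcarrier_iff by auto
      qed simp
    qed
    then show "Bmult p q U = 0" unfolding Bmult_def by simp
  qed
qed

lemma Bone_closed: "Bone \<in> Bcarrier n"
  unfolding Bcarrier_iff Bone_def by auto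

lemma Bvar_closed: "k \<in> {1..n} \<Longrightarrow> Bvar k \<in> Bcarrier n"
  unfolding Bcarrier_iff Bvar_def by auto

lemma zero_closed: "(\<lambda>_. 0) \<in> Bcarrier n"
  unfolding Bcarrier_iff by auto

lemma ev_Badd: "ev n (Badd p q) v = ev n p v + ev n q v"
  unfolding ev_def Badd_def by (simp add: sum.distrib)

lemma ev_lin: "ev n (\<lambda>S. p S + q S - c * r S) v = ev n p v + ev n q v - c * ev n r v"
  unfolding ev_def by (simp add: sum.distrib sum_subtractf sum_distrib_left)

lemma ev_zero: "ev n (\<lambda>_. 0) v = 0"
  unfolding ev_def by simp

lemma ev_Bone: "ev n Bone v = (if v \<in> cube n then 1 else 0)"
proof -
  have "(\<Sum>S\<in>Pow (setv n v). Bone S) = 1"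
  proof -
    have "finite (Pow (setv n v))" using setv_sub finite_subset by blast
    then show ?thesis unfolding Bone_def by (simp add: sum.delta')
  qed
  then show ?thesis unfolding ev_def by simp
qed

lemma ev_Bvar: "v \<in> cube n \<Longrightarrow> k \<in> {1..n} \<Longrightarrow> ev n (Bvar k) v = v k"
proof -
  assume v: "v \<in> cube n" and k: "k \<in> {1..n}"
  have f: "finite (Pow (setv n v))" using setv_sub finite_subset by blast
  have "(\<Sum>S\<in>Pow (setv n v). Bvar k S) = (if {k} \<in> Pow (setv n v) then 1 else 0)"
    unfolding Bvar_def using f by (simp add: sum.delta')
  also have "\<dots> = v k" using cube_val[OF v k] by simp
  finally show ?thesis unfolding ev_def using v by simp
qed

lemma ev_Bmult: "ev n (Bmult p q) v = ev n p v * ev n q v"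
proof (cases "v \<in> cube n")
  case False then show ?thesis unfolding ev_def by simp
next
  case True
  define A where "A = setv n v"
  have fA: "finite A" unfolding A_def using setv_sub finite_subset by blast
  define g where "g = (\<lambda>U S T. if S \<union> T = U then p S * q T else (0::int))"
  have step1: "Bmult p q U = (\<Sum>S\<in>Pow A. \<Sum>T\<in>Pow A. g U S T)" if "U \<in> Pow A" for U
  proof -
    have inner: "(\<Sum>T\<in>Pow U. g U S T) = (\<Sum>T\<in>Pow A. g U S T)" for S
      by (rule sum.mono_neutral_left) (use fA that in \<open>auto simp: g_def\<close>)
    have "Bmult p q U = (\<Sum>S\<in>Pow U. \<Sum>T\<in>Pow U. g U S T)" unfolding Bmult_def g_def by simp
    also have "\<dots> = (\<Sum>S\<in>Pow U. \<Sum>T\<in>Pow A. g U S T)" using inner by simp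
    also have "\<dots> = (\<Sum>S\<in>Pow A. \<Sum>T\<in>Pow A. g U S T)"
      by (rule sum.mono_neutral_left) (use fA that in \<open>auto simp: g_def intro!: sum.neutral\<close>)
    finally show ?thesis .
  qed
  have "ev n (Bmult p q) v = (\<Sum>U\<in>Pow A. \<Sum>S\<in>Pow A. \<Sum>T\<in>Pow A. g U S T)"
    unfolding ev_def A_def using True step1[unfolded A_def] by simp
  also have "\<dots> = (\<Sum>S\<in>Pow A. \<Sum>U\<in>Pow A. \<Sum>T\<in>Pow A. g U S T)" by (rule sum.swap)
  also have "\<dots> = (\<Sum>S\<in>Pow A. \<Sum>T\<in>Pow A. \<Sum>U\<in>Pow A. g U S T)" by (rule sum.cong[OF refl], rule sum.swap)
  also have "\<dots> = (\<Sum>S\<in>Pow A. \<Sum>T\<in>Pow A. p S * q T)"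
  proof (intro sum.cong refl)
    fix S T assume "S \<in> Pow A" "T \<in> Pow A"
    then have "S \<union> T \<in> Pow A" by auto
    then show "(\<Sum>U\<in>Pow A. g U S T) = p S * q T" unfolding g_def using fA
      by (simp add: sum.delta[of "Pow A" "S \<union> T"] eq_commute[of "S \<union> T"])
  qed
  also have "\<dots> = (\<Sum>S\<in>Pow A. p S) * (\<Sum>T\<in>Pow A. q T)" by (simp add: sum_product)
  finally show ?thesis unfolding ev_def A_def using True by simp
qed

lemma ev_inj:
  assumes "p \<in> Bcarrier n" "q \<in> Bcarrier n" "\<And>v. v \<in> cube n \<Longrightarrow> ev n p v = ev n q v"
  shows "p = q"
proof -
  have "ev n p = ev n q" using assms(3) unfolding ev_def by auto
  then show ?thesis using mob_ev[OF assms(1)] mob_ev[OF assms(2)] by metis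
qed

lemma mob_indep:
  assumes k: "k \<in> {1..n}" and ind: "\<And>A. A \<subseteq> {1..n} \<Longrightarrow> f (pt n (insert k A)) = f (pt n (A - {k}))"
  shows "Bindep k (mob n f)"
  unfolding Bindep_def
proof (intro allI impI)
  fix S assume nz: "mob n f S \<noteq> 0"
  show "k \<notin> S"
  proof
    assume kS: "k \<in> S"
    have Ssub: "S \<subseteq> {1..n}" using nz unfolding mob_def by (auto split: if_splits)
    then have fS: "finite S" using finite_subset by blast
    define S' where "S' = S - {k}"
    have fP: "finite (Pow S')" using fS S'_def by simp
    have PowS: "Pow S = Pow S' \<union> insert k ` Pow S'" unfolding S'_def using kS
      by (metis Pow_insert insert_Diff)
    have disj: "Pow S' \<inter> insert k ` Pow S' = {}" unfolding S'_def by auto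
    have inj: "inj_on (insert k) (Pow S')" unfolding inj_on_def S'_def
      by (metis Diff_insert_absorb PowD insert_absorb insert_subset subset_Diff_insert)
    define h where "h = (\<lambda>A. (-1::int) ^ card (S - A) * f (pt n A))"
    have "mob n f S = (\<Sum>A\<in>Pow S. h A)" unfolding mob_def h_def using Ssub by simp
    also have "\<dots> = (\<Sum>A\<in>Pow S'. h A) + (\<Sum>A\<in>insert k ` Pow S'. h A)"
      unfolding PowS by (rule sum.union_disjoint) (use fP disj in auto)
    also have "(\<Sum>A\<in>insert k ` Pow S'. h A) = (\<Sum>A\<in>Pow S'. h (insert k A))"
      using sum.reindex[OF inj] by simp
    also have "\<dots> = (\<Sum>A\<in>Pow S'. - h A)"
    proof (rule sum.cong)
      fix A assume A: "A \<in> Pow S'"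
      then have kA: "k \<notin> A" and AS: "A \<subseteq> S" unfolding S'_def by auto
      have fA: "finite (S - insert k A)" using fS by simp
      have eq: "S - A = insert k (S - insert k A)" using kS kA by auto
      have c: "card (S - A) = Suc (card (S - insert k A))"
        unfolding eq by (rule card_insert_disjoint[OF fA]) simp
      have "A \<subseteq> {1..n}" using AS Ssub by blast
      then have "f (pt n (insert k A)) = f (pt n A)" using ind[of A] kA by simp
      then show "h (insert k A) = - h A" unfolding h_def using c by simp
    qed simp
    finally have "mob n f S = 0" by (simp add: sum_negf)
    then show False using nz by simp
  qed
qed



definition FX :: "'a set \<Rightarrow> ('a \<Rightarrow> int) set" where
  "FX Xs = {f. \<forall>x. x \<notin> Xs \<longrightarrow> f x = 0}"

lemma char_point:
  fixes chi :: "('a \<Rightarrow> int) \<Rightarrow> int"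
  assumes fin: "finite Xs"
    and add: "\<And>f g. f \<in> FX Xs \<Longrightarrow> g \<in> FX Xs \<Longrightarrow> chi (\<lambda>x. f x + g x) = chi f + chi g"
    and mult: "\<And>f g. f \<in> FX Xs \<Longrightarrow> g \<in> FX Xs \<Longrightarrow> chi (\<lambda>x. f x * g x) = chi f * chi g"
    and one: "chi (\<lambda>x. if x \<in> Xs then 1 else 0) = 1"
  shows "\<exists>u\<in>Xs. \<forall>f\<in>FX Xs. chi f = f u"
proof -
  have z: "(\<lambda>x. 0) \<in> FX Xs" unfolding FX_def by simp
  have chi0: "chi (\<lambda>x. 0) = 0" using add[OF z z] by simp
  have negc: "f \<in> FX Xs \<Longrightarrow> (\<lambda>x. - f x) \<in> FX Xs" for f unfolding FX_def by simp
  have smc: "f \<in> FX Xs \<Longrightarrow> (\<lambda>x. c * f x) \<in> FX Xs" for f c unfolding FX_def by simp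
  have neg: "chi (\<lambda>x. - f x) = - chi f" if "f \<in> FX Xs" for f
    using add[OF negc[OF that] that] chi0 by simp
  have natsc: "chi (\<lambda>x. int m * f x) = int m * chi f" if "f \<in> FX Xs" for f m
  proof (induction m)
    case 0 then show ?case using chi0 by simp
  next
    case (Suc m)
    have "chi (\<lambda>x. int (Suc m) * f x) = chi (\<lambda>x. int m * f x + f x)" by (simp add: algebra_simps)
    also have "\<dots> = int m * chi f + chi f" using add[OF smc[OF that] that] Suc by simp
    finally show ?case by (simp add: algebra_simps)
  qed
  have sc: "chi (\<lambda>x. c * f x) = c * chi f" if "f \<in> FX Xs" for f c
  proof (cases "c \<ge> 0")
    case True then show ?thesis using natsc[OF that, of "nat c"] by simp
  next
    case False
    define m where "m = nat (-c)"
    have cm: "c = - int m" using False m_def by simp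
    have "chi (\<lambda>x. c * f x) = chi (\<lambda>x. - (int m * f x))" unfolding cm by simp
    also have "\<dots> = - (int m * chi f)" using neg[OF smc[OF that]] natsc[OF that] by simp
    finally show ?thesis unfolding cm by simp
  qed
  have sumc: "chi (\<lambda>x. \<Sum>u\<in>Y. g u x) = (\<Sum>u\<in>Y. chi (g u))" if "finite Y" "\<And>u. u \<in> Y \<Longrightarrow> g u \<in> FX Xs" for Y g
    using that
  proof (induction Y rule: finite_induct)
    case empty then show ?case using chi0 by simp
  next
    case (insert y Y)
    have m: "(\<lambda>x. \<Sum>u\<in>Y. g u x) \<in> FX Xs" using insert.prems unfolding FX_def by simp
    have "chi (\<lambda>x. \<Sum>u\<in>insert y Y. g u x) = chi (\<lambda>x. g y x + (\<Sum>u\<in>Y. g u x))" using insert by simp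
    also have "\<dots> = chi (g y) + chi (\<lambda>x. \<Sum>u\<in>Y. g u x)" using add[OF insert.prems[of y] m] by simp
    finally show ?case using insert by simp
  qed
  define d where "d = (\<lambda>(u::'a) x. if x = u then (1::int) else 0)"
  have dF: "u \<in> Xs \<Longrightarrow> d u \<in> FX Xs" for u unfolding d_def FX_def by auto
  have decomp: "f = (\<lambda>x. \<Sum>u\<in>Xs. f u * d u x)" if "f \<in> FX Xs" for f
  proof
    fix x
    show "f x = (\<Sum>u\<in>Xs. f u * d u x)"
      using that fin unfolding d_def FX_def by (cases "x \<in> Xs") (simp_all add: if_distrib cong: if_cong)
  qed
  have lin: "chi f = (\<Sum>u\<in>Xs. f u * chi (d u))" if "f \<in> FX Xs" for f
  proof -
    have "chi f = chi (\<lambda>x. \<Sum>u\<in>Xs. f u * d u x)" using decomp[OF that] by simp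
    also have "\<dots> = (\<Sum>u\<in>Xs. chi (\<lambda>x. f u * d u x))" by (rule sumc[OF fin]) (simp add: smc dF)
    also have "\<dots> = (\<Sum>u\<in>Xs. f u * chi (d u))" by (rule sum.cong) (simp_all add: sc dF)
    finally show ?thesis .
  qed
  have idem: "chi (d u) * chi (d u) = chi (d u)" if "u \<in> Xs" for u
  proof -
    have "(\<lambda>x. d u x * d u x) = d u" unfolding d_def by auto
    then show ?thesis using mult[OF dF[OF that] dF[OF that]] by simp
  qed
  have orth: "chi (d u) * chi (d w) = 0" if "u \<in> Xs" "w \<in> Xs" "u \<noteq> w" for u w
  proof -
    have "(\<lambda>x. d u x * d w x) = (\<lambda>x. 0)" using that unfolding d_def by auto
    then show ?thesis using mult[OF dF[OF that(1)] dF[OF that(2)]] chi0 by simp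
  qed
  have oneF: "(\<lambda>x. if x \<in> Xs then 1 else 0) \<in> FX Xs" unfolding FX_def by simp
  have "(\<Sum>u\<in>Xs. chi (d u)) = 1" using lin[OF oneF] one by simp
  then obtain u0 where u0: "u0 \<in> Xs" "chi (d u0) \<noteq> 0" by (metis sum.neutral zero_neq_one)
  have c1: "chi (d u0) = 1" using idem[OF u0(1)] u0(2) by (metis mult_cancel_right1)
  have c0: "chi (d w) = 0" if "w \<in> Xs" "w \<noteq> u0" for w
    using orth[OF that(1) u0(1) that(2)] c1 by simp
  show ?thesis
  proof (intro bexI[OF _ u0(1)] ballI)
    fix f assume f: "f \<in> FX Xs"
    have "chi f = (\<Sum>u\<in>Xs. if u = u0 then f u else 0)"
      unfolding lin[OF f] by (rule sum.cong) (auto simp: c1 c0)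
    also have "\<dots> = f u0" using fin u0(1) by simp
    finally show "chi f = f u0" .
  qed
qed



lemma carrier_BAut: "carrier (BAut n) = ring_iso (Bring n) (Bring n) \<inter> Bij (Bcarrier n)"
  by (simp add: BAut_def BijGroup_def)

lemma mult_BAut: "a \<in> Bij (Bcarrier n) \<Longrightarrow> b \<in> Bij (Bcarrier n) \<Longrightarrow> a \<otimes>\<^bsub>BAut n\<^esub> b = compose (Bcarrier n) a b"
  by (simp add: BAut_def BijGroup_def)

lemma one_BAut: "\<one>\<^bsub>BAut n\<^esub> = (\<lambda>x\<in>Bcarrier n. x)"
  by (simp add: BAut_def BijGroup_def)

lemma ring_hom_Bring: "a \<in> ring_hom (Bring n) (Bring n) \<longleftrightarrow>
   (a \<in> Bcarrier n \<rightarrow> Bcarrier n \<and> (\<forall>x y. x \<in> Bcarrier n \<and> y \<in> Bcarrier n \<longrightarrow>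
      a (Bmult x y) = Bmult (a x) (a y) \<and> a (Badd x y) = Badd (a x) (a y)) \<and> a Bone = Bone)"
  by (simp add: ring_hom_def Bring_def)

lemma carrier_BAut_iff: "a \<in> carrier (BAut n) \<longleftrightarrow>
   (a \<in> Bcarrier n \<rightarrow> Bcarrier n \<and> (\<forall>x y. x \<in> Bcarrier n \<and> y \<in> Bcarrier n \<longrightarrow>
      a (Bmult x y) = Bmult (a x) (a y) \<and> a (Badd x y) = Badd (a x) (a y)) \<and> a Bone = Bone
    \<and> bij_betw a (Bcarrier n) (Bcarrier n) \<and> a \<in> extensional (Bcarrier n))"
  unfolding carrier_BAut ring_iso_def ring_hom_Bring Bij_def by (auto simp: Bring_def)

lemma BAut_E:
  assumes "a \<in> carrier (BAut n)"
  shows "a \<in> Bcarrier n \<rightarrow> Bcarrier n"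
    and "\<And>x y. x \<in> Bcarrier n \<Longrightarrow> y \<in> Bcarrier n \<Longrightarrow> a (Bmult x y) = Bmult (a x) (a y)"
    and "\<And>x y. x \<in> Bcarrier n \<Longrightarrow> y \<in> Bcarrier n \<Longrightarrow> a (Badd x y) = Badd (a x) (a y)"
    and "a Bone = Bone"
    and "bij_betw a (Bcarrier n) (Bcarrier n)"
    and "a \<in> extensional (Bcarrier n)"
proof -
  have h: "a \<in> Bcarrier n \<rightarrow> Bcarrier n \<and> (\<forall>x y. x \<in> Bcarrier n \<and> y \<in> Bcarrier n \<longrightarrow>
      a (Bmult x y) = Bmult (a x) (a y) \<and> a (Badd x y) = Badd (a x) (a y)) \<and> a Bone = Bone
    \<and> bij_betw a (Bcarrier n) (Bcarrier n) \<and> a \<in> extensional (Bcarrier n)"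
    by (rule iffD1[OF carrier_BAut_iff assms])
  then show "a \<in> Bcarrier n \<rightarrow> Bcarrier n" "a Bone = Bone" "bij_betw a (Bcarrier n) (Bcarrier n)"
    "a \<in> extensional (Bcarrier n)" by blast+
  fix x y assume "x \<in> Bcarrier n" "y \<in> Bcarrier n"
  then show "a (Bmult x y) = Bmult (a x) (a y)" "a (Badd x y) = Badd (a x) (a y)" using h by blast+
qed

definition Tm :: "nat \<Rightarrow> ((nat \<Rightarrow> int) \<Rightarrow> (nat \<Rightarrow> int)) \<Rightarrow> (nat set \<Rightarrow> int) \<Rightarrow> (nat set \<Rightarrow> int)" where
  "Tm n \<sigma> = (\<lambda>p\<in>Bcarrier n. mob n (\<lambda>v. if v \<in> cube n then ev n p (\<sigma> v) else 0))"

lemma Tm_in: "p \<in> Bcarrier n \<Longrightarrow> Tm n \<sigma> p \<in> Bcarrier n"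
  unfolding Tm_def by (simp add: mob_Bcarrier)

lemma ev_Tm: "p \<in> Bcarrier n \<Longrightarrow> v \<in> cube n \<Longrightarrow> ev n (Tm n \<sigma> p) v = ev n p (\<sigma> v)"
proof -
  assume p: "p \<in> Bcarrier n" and v: "v \<in> cube n"
  have "(\<lambda>v. if v \<in> cube n then ev n p (\<sigma> v) else 0) \<in> Fc n" unfolding Fc_def by simp
  then show ?thesis unfolding Tm_def using p v ev_mob by simp
qed

lemma Tm_cong: "(\<And>v. v \<in> cube n \<Longrightarrow> \<sigma> v = \<tau> v) \<Longrightarrow> Tm n \<sigma> = Tm n \<tau>"
  unfolding Tm_def by (intro restrict_ext arg_cong[where f="mob n"]) auto

lemma Tm_comp: "\<sigma> ` cube n \<subseteq> cube n \<Longrightarrow> p \<in> Bcarrier n \<Longrightarrow> Tm n \<sigma> (Tm n \<tau> p) = Tm n (\<lambda>v. \<tau> (\<sigma> v)) p"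
  by (rule ev_inj[where n=n]) (auto simp: Tm_in ev_Tm)

lemma Tm_id: "(\<And>v. v \<in> cube n \<Longrightarrow> \<sigma> v = v) \<Longrightarrow> p \<in> Bcarrier n \<Longrightarrow> Tm n \<sigma> p = p"
  by (rule ev_inj[where n=n]) (auto simp: Tm_in ev_Tm)

lemma Tm_aut:
  assumes bij: "bij_betw \<sigma> (cube n) (cube n)"
  shows "Tm n \<sigma> \<in> carrier (BAut n)"
  unfolding carrier_BAut_iff
proof (intro conjI allI impI)
  have im: "\<sigma> ` cube n \<subseteq> cube n" using bij_betw_imp_surj_on[OF bij] by simp
  have im': "\<sigma> v \<in> cube n" if "v \<in> cube n" for v using bij_betwE[OF bij] that by blast
  show "Tm n \<sigma> \<in> Bcarrier n \<rightarrow> Bcarrier n" using Tm_in by blast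
  fix x y assume xy: "x \<in> Bcarrier n \<and> y \<in> Bcarrier n"
  show "Tm n \<sigma> (Bmult x y) = Bmult (Tm n \<sigma> x) (Tm n \<sigma> y)"
    by (rule ev_inj[where n=n]) (use xy in \<open>auto simp: Tm_in ev_Tm Bmult_closed ev_Bmult\<close>)
  show "Tm n \<sigma> (Badd x y) = Badd (Tm n \<sigma> x) (Tm n \<sigma> y)"
    by (rule ev_inj[where n=n]) (use xy in \<open>auto simp: Tm_in ev_Tm Badd_closed ev_Badd\<close>)
next
  have im': "\<sigma> v \<in> cube n" if "v \<in> cube n" for v using bij_betwE[OF bij] that by blast
  show "Tm n \<sigma> Bone = Bone"
    by (rule ev_inj[where n=n]) (auto simp: Tm_in ev_Tm Bone_closed ev_Bone im')
next
  have im: "\<sigma> ` cube n \<subseteq> cube n" using bij_betw_imp_surj_on[OF bij] by simp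
  show "bij_betw (Tm n \<sigma>) (Bcarrier n) (Bcarrier n)"
    unfolding bij_betw_def
  proof
    show "inj_on (Tm n \<sigma>) (Bcarrier n)"
    proof (rule inj_onI)
      fix p q assume p: "p \<in> Bcarrier n" and q: "q \<in> Bcarrier n" and e: "Tm n \<sigma> p = Tm n \<sigma> q"
      show "p = q"
      proof (rule ev_inj[OF p q])
        fix w assume w: "w \<in> cube n"
        define v where "v = inv_into (cube n) \<sigma> w"
        have v1: "v \<in> cube n" unfolding v_def using bij_betwE[OF bij_betw_inv_into[OF bij]] w by blast
        have v2: "\<sigma> v = w" unfolding v_def by (rule bij_betw_inv_into_right[OF bij w])
        note v = v1 v2
        have "ev n (Tm n \<sigma> p) v = ev n (Tm n \<sigma> q) v" using e by simp
        then show "ev n p w = ev n q w" using ev_Tm p q v by simp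
      qed
    qed
    show "Tm n \<sigma> ` Bcarrier n = Bcarrier n"
    proof
      show "Tm n \<sigma> ` Bcarrier n \<subseteq> Bcarrier n" using Tm_in by blast
      show "Bcarrier n \<subseteq> Tm n \<sigma> ` Bcarrier n"
      proof
        fix q assume q: "q \<in> Bcarrier n"
        have "Tm n \<sigma> (Tm n (inv_into (cube n) \<sigma>) q) = Tm n (\<lambda>v. inv_into (cube n) \<sigma> (\<sigma> v)) q"
          by (rule Tm_comp[OF im q])
        also have "\<dots> = q" by (rule Tm_id[OF _ q]) (erule bij_betw_inv_into_left[OF bij])
        finally show "q \<in> Tm n \<sigma> ` Bcarrier n" using Tm_in[OF q] by (metis image_eqI)
      qed
    qed
  qed
next
  show "Tm n \<sigma> \<in> extensional (Bcarrier n)" unfolding Tm_def by simp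
qed

definition Th :: "nat \<Rightarrow> ((nat \<Rightarrow> int) \<Rightarrow> (nat \<Rightarrow> int)) \<Rightarrow> (nat set \<Rightarrow> int) \<Rightarrow> (nat set \<Rightarrow> int)" where
  "Th n g = Tm n (inv_into (cube n) g)"

lemma Bij_bij: "g \<in> Bij S \<Longrightarrow> bij_betw g S S" by (simp add: Bij_def)

lemma Th_aut: "g \<in> Bij (cube n) \<Longrightarrow> Th n g \<in> carrier (BAut n)"
  unfolding Th_def by (rule Tm_aut) (simp add: Bij_def bij_betw_inv_into)

lemma inv_compose:
  assumes g: "bij_betw g S S" and h: "bij_betw h S S" and v: "v \<in> S"
  shows "inv_into S (compose S g h) v = inv_into S h (inv_into S g v)"
proof (rule inv_into_f_eq)
  show "inj_on (compose S g h) S" using bij_betw_compose[OF h g] unfolding bij_betw_def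
    by (metis compose_eq inj_on_cong)
  have gi: "inv_into S g v \<in> S" using bij_betwE[OF bij_betw_inv_into[OF g]] v by blast
  then show hi: "inv_into S h (inv_into S g v) \<in> S" using bij_betwE[OF bij_betw_inv_into[OF h]] by blast
  show "compose S g h (inv_into S h (inv_into S g v)) = v"
    using hi gi v by (simp add: compose_eq bij_betw_inv_into_right[OF h] bij_betw_inv_into_right[OF g])
qed

lemma Th_mult:
  assumes g: "g \<in> Bij (cube n)" and h: "h \<in> Bij (cube n)"
  shows "Th n (compose (cube n) g h) = compose (Bcarrier n) (Th n g) (Th n h)"
proof
  fix p
  show "Th n (compose (cube n) g h) p = compose (Bcarrier n) (Th n g) (Th n h) p"
  proof (cases "p \<in> Bcarrier n")
    case False then show ?thesis unfolding Th_def Tm_def compose_def by simp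
  next
    case True
    have im: "inv_into (cube n) g ` cube n \<subseteq> cube n"
      using bij_betw_imp_surj_on[OF bij_betw_inv_into[OF Bij_bij[OF g]]] by simp
    have "compose (Bcarrier n) (Th n g) (Th n h) p = Th n g (Th n h p)" using True by (simp add: compose_eq)
    also have "\<dots> = Tm n (\<lambda>v. inv_into (cube n) h (inv_into (cube n) g v)) p"
      unfolding Th_def by (rule Tm_comp[OF im True])
    also have "\<dots> = Th n (compose (cube n) g h) p"
      unfolding Th_def using inv_compose[OF Bij_bij[OF g] Bij_bij[OF h]]
      by (metis (no_types, lifting) Tm_cong)
    finally show ?thesis by simp
  qed
qed

lemma Th_inj: "inj_on (Th n) (Bij (cube n))"
proof (rule inj_onI)
  fix g h assume g: "g \<in> Bij (cube n)" and h: "h \<in> Bij (cube n)" and e: "Th n g = Th n h"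
  have gb: "bij_betw g (cube n) (cube n)" and hb: "bij_betw h (cube n) (cube n)" using g h Bij_bij by auto
  have ii: "inv_into (cube n) g w = inv_into (cube n) h w" if w: "w \<in> cube n" for w
  proof -
    define u where "u = inv_into (cube n) g w"
    have u: "u \<in> cube n" unfolding u_def using bij_betwE[OF bij_betw_inv_into[OF gb]] w by blast
    define f where "f = (\<lambda>v. if v = u then (1::int) else 0)"
    have fF: "f \<in> Fc n" unfolding Fc_def f_def using u by auto
    have "ev n (Th n g (mob n f)) w = ev n (Th n h (mob n f)) w" using e by simp
    then have "f (inv_into (cube n) g w) = f (inv_into (cube n) h w)"
      unfolding Th_def using ev_Tm[OF mob_Bcarrier w] ev_mob[OF fF] by simp
    then show ?thesis unfolding f_def u_def by (auto split: if_splits)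
  qed
  show "g = h"
  proof (rule extensionalityI[OF Bij_imp_extensional[OF g] Bij_imp_extensional[OF h]])
    fix x assume x: "x \<in> cube n"
    have gx: "g x \<in> cube n" using bij_betwE[OF gb] x by blast
    have "inv_into (cube n) h (g x) = x" using ii[OF gx] bij_betw_inv_into_left[OF gb x] by simp
    then show "g x = h x" using bij_betw_inv_into_right[OF hb gx] by metis
  qed
qed

lemma mob_add: "f \<in> Fc n \<Longrightarrow> g \<in> Fc n \<Longrightarrow> mob n (\<lambda>x. f x + g x) = Badd (mob n f) (mob n g)"
proof -
  assume f: "f \<in> Fc n" and g: "g \<in> Fc n"
  have fg: "(\<lambda>x. f x + g x) \<in> Fc n" using f g unfolding Fc_def by simp
  show ?thesis by (rule ev_inj[where n=n]) (simp_all add: mob_Bcarrier Badd_closed ev_Badd ev_mob f g fg)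
qed

lemma mob_mult: "f \<in> Fc n \<Longrightarrow> g \<in> Fc n \<Longrightarrow> mob n (\<lambda>x. f x * g x) = Bmult (mob n f) (mob n g)"
proof -
  assume f: "f \<in> Fc n" and g: "g \<in> Fc n"
  have fg: "(\<lambda>x. f x * g x) \<in> Fc n" using f g unfolding Fc_def by simp
  show ?thesis by (rule ev_inj[where n=n]) (simp_all add: mob_Bcarrier Bmult_closed ev_Bmult ev_mob f g fg)
qed

lemma mob_one: "mob n (\<lambda>v. if v \<in> cube n then 1 else 0) = Bone"
proof -
  have o: "(\<lambda>v. if v \<in> cube n then 1 else 0) \<in> Fc n" unfolding Fc_def by simp
  show ?thesis by (rule ev_inj[where n=n]) (simp_all add: mob_Bcarrier Bone_closed ev_Bone ev_mob o)
qed

lemma aut_point: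
  assumes a: "a \<in> carrier (BAut n)" and w: "w \<in> cube n"
  shows "\<exists>u\<in>cube n. \<forall>p\<in>Bcarrier n. ev n (a p) w = ev n p u"
proof -
  note A = BAut_E[OF a]
  have FXe: "FX (cube n) = Fc n" unfolding FX_def Fc_def by simp
  have "\<exists>u\<in>cube n. \<forall>f\<in>FX (cube n). ev n (a (mob n f)) w = f u"
  proof (rule char_point[OF finite_cube])
    fix f g assume "f \<in> FX (cube n)" "g \<in> FX (cube n)"
    then have f: "f \<in> Fc n" and g: "g \<in> Fc n" using FXe by auto
    show "ev n (a (mob n (\<lambda>x. f x + g x))) w = ev n (a (mob n f)) w + ev n (a (mob n g)) w"
      using mob_add[OF f g] A(3)[OF mob_Bcarrier mob_Bcarrier] by (simp add: ev_Badd)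
    show "ev n (a (mob n (\<lambda>x. f x * g x))) w = ev n (a (mob n f)) w * ev n (a (mob n g)) w"
      using mob_mult[OF f g] A(2)[OF mob_Bcarrier mob_Bcarrier] by (simp add: ev_Bmult)
  next
    show "ev n (a (mob n (\<lambda>x. if x \<in> cube n then 1 else 0))) w = 1"
      using mob_one A(4) w by (simp add: ev_Bone)
  qed
  then obtain u where u: "u \<in> cube n" "\<And>f. f \<in> Fc n \<Longrightarrow> ev n (a (mob n f)) w = f u" using FXe by auto
  show ?thesis
  proof (intro bexI[OF _ u(1)] ballI)
    fix p assume p: "p \<in> Bcarrier n"
    show "ev n (a p) w = ev n p u" using u(2)[OF ev_Fc, of p] mob_ev[OF p] by simp
  qed
qed

lemma Th_surj:
  assumes a: "a \<in> carrier (BAut n)"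
  shows "\<exists>g\<in>Bij (cube n). Th n g = a"
proof -
  define \<rho> where "\<rho> = (\<lambda>w. SOME u. u \<in> cube n \<and> (\<forall>p\<in>Bcarrier n. ev n (a p) w = ev n p u))"
  have \<rho>: "\<rho> w \<in> cube n \<and> (\<forall>p\<in>Bcarrier n. ev n (a p) w = ev n p (\<rho> w))" if "w \<in> cube n" for w
  proof -
    have ex: "\<exists>u. u \<in> cube n \<and> (\<forall>p\<in>Bcarrier n. ev n (a p) w = ev n p u)"
      using aut_point[OF a that] by blast
    show ?thesis unfolding \<rho>_def by (rule someI_ex[OF ex])
  qed
  have \<rho>1: "\<rho> w \<in> cube n" if "w \<in> cube n" for w using \<rho>[OF that] by (rule conjunct1)
  have \<rho>2: "ev n (a p) w = ev n p (\<rho> w)" if "w \<in> cube n" "p \<in> Bcarrier n" for w p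
    using \<rho>[OF that(1)] that(2) by blast
  note ab = BAut_E(5)[OF a] and aext = BAut_E(6)[OF a]
  have inj: "inj_on \<rho> (cube n)"
  proof (rule inj_onI)
    fix w1 w2 assume w1: "w1 \<in> cube n" and w2: "w2 \<in> cube n" and e: "\<rho> w1 = \<rho> w2"
    define f where "f = (\<lambda>v. if v = w1 then (1::int) else 0)"
    have fF: "f \<in> Fc n" unfolding Fc_def f_def using w1 by auto
    define p where "p = inv_into (Bcarrier n) a (mob n f)"
    have mq: "mob n f \<in> Bcarrier n" by (rule mob_Bcarrier)
    have p1: "p \<in> Bcarrier n" unfolding p_def using bij_betwE[OF bij_betw_inv_into[OF ab]] mq by blast
    have p2: "a p = mob n f" unfolding p_def by (rule bij_betw_inv_into_right[OF ab mq])
    note p = p1 p2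
    have "f w1 = ev n (a p) w1" using p(2) ev_mob[OF fF] by simp
    also have "\<dots> = ev n p (\<rho> w1)" by (rule \<rho>2[OF w1 p(1)])
    also have "\<dots> = ev n p (\<rho> w2)" by (simp only: e)
    also have "\<dots> = ev n (a p) w2" by (rule \<rho>2[OF w2 p(1), symmetric])
    also have "\<dots> = f w2" using p(2) ev_mob[OF fF] by simp
    finally have "f w1 = f w2" .
    then show "w1 = w2" unfolding f_def by (cases "w2 = w1") simp_all
  qed
  have im: "\<rho> ` cube n \<subseteq> cube n" using \<rho>1 by blast
  have rb: "bij_betw \<rho> (cube n) (cube n)"
    unfolding bij_betw_def using inj endo_inj_surj[OF finite_cube im inj] by blast
  define g where "g = restrict (inv_into (cube n) \<rho>) (cube n)"
  have gb: "bij_betw g (cube n) (cube n)" unfolding g_def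
    by (rule iffD2[OF bij_betw_cong bij_betw_inv_into[OF rb]]) simp
  have gB: "g \<in> Bij (cube n)" using gb unfolding Bij_def g_def by simp
  have ig: "inv_into (cube n) g v = \<rho> v" if v: "v \<in> cube n" for v
  proof (rule inv_into_f_eq)
    show "inj_on g (cube n)" using gb bij_betw_def by blast
    show "\<rho> v \<in> cube n" using \<rho>1 v by blast
    then show "g (\<rho> v) = v" unfolding g_def using bij_betw_inv_into_left[OF rb v] by simp
  qed
  have "Th n g = a"
  proof
    fix p
    show "Th n g p = a p"
    proof (cases "p \<in> Bcarrier n")
      case False then show ?thesis using aext unfolding Th_def Tm_def extensional_def by simp
    next
      case True
      have "Th n g p = Tm n \<rho> p" unfolding Th_def using ig by (metis Tm_cong)
      also have "\<dots> = a p"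
      proof (rule ev_inj[where n=n])
        show "Tm n \<rho> p \<in> Bcarrier n" by (rule Tm_in[OF True])
        show "a p \<in> Bcarrier n" using bij_betwE[OF ab] True by blast
        fix v assume v: "v \<in> cube n"
        show "ev n (Tm n \<rho> p) v = ev n (a p) v" using ev_Tm[OF True v] \<rho>2[OF v True] by simp
      qed
      finally show ?thesis .
    qed
  qed
  then show ?thesis using gB by blast
qed



lemma mult_BijGroup: "a \<in> Bij S \<Longrightarrow> b \<in> Bij S \<Longrightarrow> a \<otimes>\<^bsub>BijGroup S\<^esub> b = compose S a b"
  by (simp add: BijGroup_def)

lemma carrier_BijGroup: "carrier (BijGroup S) = Bij S"
  by (simp add: BijGroup_def)

lemma BAut_sub_Bij: "carrier (BAut n) \<subseteq> Bij (Bcarrier n)"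
  by (simp add: carrier_BAut)

lemma Th_id: "Th n (\<lambda>x\<in>cube n. x) = (\<lambda>p\<in>Bcarrier n. p)"
proof
  fix p
  show "Th n (\<lambda>x\<in>cube n. x) p = (\<lambda>p\<in>Bcarrier n. p) p"
  proof (cases "p \<in> Bcarrier n")
    case False then show ?thesis unfolding Th_def Tm_def by simp
  next
    case True
    have ii: "inv_into (cube n) (\<lambda>x\<in>cube n. x) v = v" if "v \<in> cube n" for v
      by (rule inv_into_f_eq) (use that in \<open>auto simp: inj_on_def\<close>)
    have "Th n (\<lambda>x\<in>cube n. x) p = p" unfolding Th_def by (rule Tm_id[OF ii True])
    then show ?thesis using True by simp
  qed
qed

lemma BAut_subgroup: "subgroup (ring_iso (Bring n) (Bring n) \<inter> Bij (Bcarrier n)) (BijGroup (Bcarrier n))"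
proof -
  let ?H = "ring_iso (Bring n) (Bring n) \<inter> Bij (Bcarrier n)"
  have H: "?H = carrier (BAut n)" by (simp add: carrier_BAut)
  interpret G: group "BijGroup (Bcarrier n)" by (rule group_BijGroup)
  show ?thesis
  proof
    show "?H \<subseteq> carrier (BijGroup (Bcarrier n))" by (auto simp: carrier_BijGroup)
  next
    fix x y assume "x \<in> ?H" "y \<in> ?H"
    then obtain g h where g: "g \<in> Bij (cube n)" "Th n g = x" and h: "h \<in> Bij (cube n)" "Th n h = y"
      using Th_surj H by metis
    have "x \<otimes>\<^bsub>BijGroup (Bcarrier n)\<^esub> y = compose (Bcarrier n) x y"
      using \<open>x \<in> ?H\<close> \<open>y \<in> ?H\<close> by (simp add: mult_BijGroup)
    also have "\<dots> = Th n (compose (cube n) g h)" using Th_mult[OF g(1) h(1)] g h by simp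
    finally show "x \<otimes>\<^bsub>BijGroup (Bcarrier n)\<^esub> y \<in> ?H"
      using Th_aut[OF compose_Bij[OF g(1) h(1)]] H by simp
  next
    have "\<one>\<^bsub>BijGroup (Bcarrier n)\<^esub> = Th n (\<lambda>x\<in>cube n. x)" by (simp add: BijGroup_def Th_id)
    then show "\<one>\<^bsub>BijGroup (Bcarrier n)\<^esub> \<in> ?H" using Th_aut[OF id_Bij] H by simp
  next
    fix x assume x: "x \<in> ?H"
    then obtain g where g: "g \<in> Bij (cube n)" "Th n g = x" using Th_surj H by metis
    define g' where "g' = (\<lambda>v\<in>cube n. inv_into (cube n) g v)"
    have g': "g' \<in> Bij (cube n)" unfolding g'_def by (rule restrict_inv_into_Bij[OF g(1)])
    have xB: "x \<in> carrier (BijGroup (Bcarrier n))" using x by (simp add: carrier_BijGroup)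
    have yH: "Th n g' \<in> ?H" using Th_aut[OF g'] H by simp
    then have yB: "Th n g' \<in> carrier (BijGroup (Bcarrier n))" by (simp add: carrier_BijGroup)
    have "Th n g' \<otimes>\<^bsub>BijGroup (Bcarrier n)\<^esub> x = compose (Bcarrier n) (Th n g') (Th n g)"
      using yB xB g by (simp add: mult_BijGroup carrier_BijGroup)
    also have "\<dots> = Th n (compose (cube n) g' g)" using Th_mult[OF g' g(1)] by simp
    also have "\<dots> = Th n (\<lambda>x\<in>cube n. x)" unfolding g'_def using Bij_compose_restrict_eq[OF g(1)] by simp
    also have "\<dots> = \<one>\<^bsub>BijGroup (Bcarrier n)\<^esub>" by (simp add: BijGroup_def Th_id)
    finally have "inv\<^bsub>BijGroup (Bcarrier n)\<^esub> x = Th n g'" by (rule G.inv_equality[OF _ xB yB])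
    then show "inv\<^bsub>BijGroup (Bcarrier n)\<^esub> x \<in> ?H" using yH by simp
  qed
qed

lemma group_BAut: "group (BAut n)"
  unfolding BAut_def by (rule subgroup.subgroup_is_group[OF BAut_subgroup group_BijGroup])

lemma Th_iso: "Th n \<in> iso (BijGroup (cube n)) (BAut n)"
proof (rule isoI)
  show "Th n \<in> hom (BijGroup (cube n)) (BAut n)"
    unfolding hom_def
  proof (intro CollectI conjI ballI)
    show "Th n \<in> carrier (BijGroup (cube n)) \<rightarrow> carrier (BAut n)"
      using Th_aut by (auto simp: carrier_BijGroup)
    fix g h assume g: "g \<in> carrier (BijGroup (cube n))" and h: "h \<in> carrier (BijGroup (cube n))"
    then have g': "g \<in> Bij (cube n)" and h': "h \<in> Bij (cube n)" by (simp_all add: carrier_BijGroup)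
    have "Th n g \<in> Bij (Bcarrier n)" "Th n h \<in> Bij (Bcarrier n)"
      using Th_aut[OF g'] Th_aut[OF h'] BAut_sub_Bij by blast+
    then show "Th n (g \<otimes>\<^bsub>BijGroup (cube n)\<^esub> h) = Th n g \<otimes>\<^bsub>BAut n\<^esub> Th n h"
      using Th_mult[OF g' h'] by (simp add: mult_BijGroup[OF g' h'] mult_BAut)
  qed
  show "bij_betw (Th n) (carrier (BijGroup (cube n))) (carrier (BAut n))"
    unfolding bij_betw_def carrier_BijGroup
  proof
    show "inj_on (Th n) (Bij (cube n))" by (rule Th_inj)
    show "Th n ` Bij (cube n) = carrier (BAut n)"
      using Th_aut Th_surj by blast
  qed
qed

lemma BAut_iso: "BAut n \<cong> BijGroup (cube n)"
  by (rule group.iso_sym[OF group_BijGroup is_isoI[OF Th_iso]])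



definition cm :: "nat set \<Rightarrow> (nat \<Rightarrow>\<^sub>0 nat) \<Rightarrow> int" where
  "cm A m = (if Poly_Mapping.keys m \<subseteq> A then 1 else 0)"

definition pev :: "nat set \<Rightarrow> zpoly \<Rightarrow> int" where
  "pev A P = (\<Sum>m\<in>Poly_Mapping.keys P. Poly_Mapping.lookup P m * cm A m)"

lemma pev_superset:
  assumes "finite K" "Poly_Mapping.keys P \<subseteq> K"
  shows "pev A P = (\<Sum>m\<in>K. Poly_Mapping.lookup P m * cm A m)"
  unfolding pev_def by (rule sum.mono_neutral_left) (use assms in \<open>auto simp: in_keys_iff\<close>)

lemma pev_diff: "pev A (P - Q) = pev A P - pev A Q"
proof -
  let ?K = "Poly_Mapping.keys P \<union> Poly_Mapping.keys Q"
  have f: "finite ?K" by simp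
  have "pev A (P - Q) = (\<Sum>m\<in>?K. Poly_Mapping.lookup (P - Q) m * cm A m)"
    by (rule pev_superset[OF f]) (rule keys_diff)
  also have "\<dots> = (\<Sum>m\<in>?K. Poly_Mapping.lookup P m * cm A m) - (\<Sum>m\<in>?K. Poly_Mapping.lookup Q m * cm A m)"
    by (simp add: lookup_minus left_diff_distrib sum_subtractf)
  also have "\<dots> = pev A P - pev A Q"
    using pev_superset[OF f, of P A] pev_superset[OF f, of Q A] by simp
  finally show ?thesis .
qed

lemma pev_zero: "pev A 0 = 0"
  unfolding pev_def by simp

lemma pev_single: "pev A (Poly_Mapping.single m a) = a * cm A m"
  unfolding pev_def by simp

lemma keys_plus_nat: "Poly_Mapping.keys (m + m' :: nat \<Rightarrow>\<^sub>0 nat) = Poly_Mapping.keys m \<union> Poly_Mapping.keys m'"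
  by (auto simp: in_keys_iff lookup_add)

lemma cm_plus: "cm A (m + m') = cm A m * cm A m'"
  unfolding cm_def keys_plus_nat by auto

lemma pev_mult: "pev A (P * Q) = pev A P * pev A Q"
proof -
  have single_case: "pev A (frag_of m * Q) = pev A (frag_of m) * pev A Q" for m
  proof -
    have "Poly_Mapping.keys Q \<subseteq> UNIV" by simp
    then show ?thesis
    proof (induction Q rule: frag_induction)
      case zero then show ?case by (simp add: pev_zero)
    next
      case (one x)
      then show ?case by (simp add: mult_single pev_single cm_plus)
    next
      case (diff a b)
      then show ?case by (simp add: right_diff_distrib pev_diff)
    qed
  qed
  have "Poly_Mapping.keys P \<subseteq> UNIV" by simp
  then show ?thesis
  proof (induction P rule: frag_induction)
    case zero then show ?case by (simp add: pev_zero)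
  next
    case (one x)
    show ?case by (rule single_case)
  next
    case (diff a b)
    then show ?case by (simp add: left_diff_distrib pev_diff)
  qed
qed

lemma pev_one: "pev A 1 = 1"
proof -
  have e: "(1::zpoly) = Poly_Mapping.single 0 1" by simp
  show ?thesis by (subst e, simp only: pev_single, simp add: cm_def)
qed

lemma pev_pvar: "pev A (pvar i) = (if i \<in> A then 1 else 0)"
  unfolding pvar_def pev_single cm_def by simp

lemma pev_prod: "finite I \<Longrightarrow> pev A (\<Prod>i\<in>I. f i) = (\<Prod>i\<in>I. pev A (f i))"
  by (induction I rule: finite_induct) (simp_all add: pev_one pev_mult)

lemma ev_Bproj: "v \<in> cube n \<Longrightarrow> ev n (Bproj P) v = pev (setv n v) P"
proof -
  assume v: "v \<in> cube n"
  define A where "A = setv n v"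
  have fA: "finite (Pow A)" unfolding A_def using setv_sub finite_subset by (metis finite_Pow_iff finite_atLeastAtMost)
  let ?S = "{m \<in> Poly_Mapping.keys P. Poly_Mapping.keys m \<subseteq> A}"
  have "ev n (Bproj P) v = (\<Sum>S\<in>Pow A. \<Sum>m\<in>{m \<in> Poly_Mapping.keys P. Poly_Mapping.keys m = S}. Poly_Mapping.lookup P m)"
    unfolding ev_def Bproj_def A_def using v by simp
  also have "\<dots> = (\<Sum>S\<in>Pow A. \<Sum>m\<in>{m \<in> ?S. Poly_Mapping.keys m = S}. Poly_Mapping.lookup P m)"
    by (rule sum.cong) (auto intro!: sum.cong)
  also have "\<dots> = (\<Sum>m\<in>?S. Poly_Mapping.lookup P m)"
    by (rule sum.group) (use fA in auto)
  also have "\<dots> = pev A P"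
    unfolding pev_def cm_def by (simp add: sum.inter_filter[symmetric] mult.commute if_distrib cong: if_cong)
  finally show ?thesis unfolding A_def .
qed

definition vin :: "nat set \<Rightarrow> zpoly \<Rightarrow> bool" where
  "vin V P \<longleftrightarrow> (\<forall>m\<in>Poly_Mapping.keys P. Poly_Mapping.keys m \<subseteq> V)"

lemma vin_Gset: "P \<in> Gset n \<Longrightarrow> vin {1..n} P"
proof (induction rule: Gset.induct)
  case (var i) then show ?case unfolding vin_def pvar_def by simp
next
  case (compl P)
  show ?case unfolding vin_def
  proof
    fix m assume m: "m \<in> Poly_Mapping.keys (1 - P)"
    have "m = 0 \<or> m \<in> Poly_Mapping.keys P" using keys_diff[of 1 P] m by auto
    then show "Poly_Mapping.keys m \<subseteq> {1..n}" using compl.IH unfolding vin_def by auto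
  qed
next
  case (prod P1 P2)
  then show ?case unfolding vin_def using keys_mult[of P1 P2] by (force simp: keys_plus_nat)
qed

lemma Bproj_closed: "vin {1..n} P \<Longrightarrow> Bproj P \<in> Bcarrier n"
  unfolding Bcarrier_iff
proof (intro allI impI)
  fix S assume vP: "vin {1..n} P" and S: "\<not> S \<subseteq> {1..n}"
  have e: "{m \<in> Poly_Mapping.keys P. Poly_Mapping.keys m = S} = {}" using vP S unfolding vin_def by auto
  have "Bproj P S = (\<Sum>m\<in>{m \<in> Poly_Mapping.keys P. Poly_Mapping.keys m = S}. Poly_Mapping.lookup P m)"
    unfolding Bproj_def by simp
  also have "\<dots> = 0" unfolding e by simp
  finally show "Bproj P S = 0" .
qed

lemma Gset_prod: "finite I \<Longrightarrow> I \<noteq> {} \<Longrightarrow> (\<And>i. i \<in> I \<Longrightarrow> f i \<in> Gset n) \<Longrightarrow> (\<Prod>i\<in>I. f i) \<in> Gset n"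
proof (induction I rule: finite_ne_induct)
  case (singleton x) then show ?case by simp
next
  case (insert x F) then show ?case by (simp add: Gset.prod)
qed



lemma cube_01: "v \<in> cube n \<Longrightarrow> i \<in> {1..n} \<Longrightarrow> v i = 0 \<or> v i = 1"
  unfolding cube_iff by blast

lemma cube_out: "v \<in> cube n \<Longrightarrow> i \<notin> {1..n} \<Longrightarrow> v i = undefined"
  unfolding cube_iff by blast

lemma cube_ext: "v \<in> cube n \<Longrightarrow> w \<in> cube n \<Longrightarrow> (\<And>i. i \<in> {1..n} \<Longrightarrow> v i = w i) \<Longrightarrow> v = w"
  by (rule ext) (metis cube_out)

definition lit :: "nat \<Rightarrow> (nat \<Rightarrow> int) \<Rightarrow> nat \<Rightarrow> zpoly" where
  "lit k a i = (if i = k then 1 - pvar k * (1 - pvar k) else if a i = 1 then pvar i else 1 - pvar i)"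

definition hpol :: "nat \<Rightarrow> (nat \<Rightarrow> int) \<Rightarrow> nat \<Rightarrow> zpoly" where
  "hpol k a n = (\<Prod>i\<in>{1..n}. lit k a i)"

lemma lit_G: "k \<in> {1..n} \<Longrightarrow> i \<in> {1..n} \<Longrightarrow> lit k a i \<in> Gset n"
  unfolding lit_def using Gset.var[of k n] Gset.var[of i n] by (auto intro!: Gset.compl Gset.prod)

lemma hpol_G: "k \<in> {1..n} \<Longrightarrow> hpol k a n \<in> Gset n"
  unfolding hpol_def by (rule Gset_prod) (auto intro: lit_G)

lemma pev_lit_k: "pev B (lit k a k) = 1"
  unfolding lit_def by (simp add: pev_diff pev_one pev_mult pev_pvar)

lemma pev_lit: "i \<noteq> k \<Longrightarrow> pev B (lit k a i) = (if a i = 1 then (if i \<in> B then 1 else 0) else (if i \<in> B then 0 else 1))"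
  unfolding lit_def by (simp add: pev_diff pev_one pev_pvar)

lemma pev_hpol: "pev B (hpol k a n) = (\<Prod>i\<in>{1..n}. pev B (lit k a i))"
  unfolding hpol_def by (simp add: pev_prod)

lemma prod_indicator: "finite I \<Longrightarrow> (\<Prod>i\<in>I. if P i then (1::int) else 0) = (if \<forall>i\<in>I. P i then 1 else 0)"
  by (induction I rule: finite_induct) auto

lemma transp_facts:
  assumes "a \<in> cube n" "b \<in> cube n"
  shows "restrict (transpose a b) (cube n) \<in> Bij (cube n)"
    and "\<And>v. v \<in> cube n \<Longrightarrow> transpose a b v \<in> cube n"
    and "\<And>v. v \<in> cube n \<Longrightarrow> inv_into (cube n) (restrict (transpose a b) (cube n)) v = transpose a b v"
proof -
  have p: "transpose a b permutes cube n" by (rule permutes_swap_id[OF assms])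
  have bb: "bij_betw (transpose a b) (cube n) (cube n)" by (rule permutes_imp_bij[OF p])
  have rb: "bij_betw (restrict (transpose a b) (cube n)) (cube n) (cube n)"
    by (rule iffD2[OF bij_betw_cong bb]) simp
  then show "restrict (transpose a b) (cube n) \<in> Bij (cube n)" unfolding Bij_def by simp
  show im: "\<And>v. v \<in> cube n \<Longrightarrow> transpose a b v \<in> cube n" using permutes_in_image[OF p] by blast
  fix v assume v: "v \<in> cube n"
  show "inv_into (cube n) (restrict (transpose a b) (cube n)) v = transpose a b v"
  proof (rule inv_into_f_eq)
    show "inj_on (restrict (transpose a b) (cube n)) (cube n)" using rb bij_betw_def by blast
    show "transpose a b v \<in> cube n" by (rule im[OF v])
    then show "restrict (transpose a b) (cube n) (transpose a b v) = v" by simp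
  qed
qed

lemma ev_Th_transp:
  assumes "a \<in> cube n" "b \<in> cube n" "p \<in> Bcarrier n" "v \<in> cube n"
  shows "ev n (Th n (restrict (transpose a b) (cube n)) p) v = ev n p (transpose a b v)"
  unfolding Th_def using ev_Tm[OF assms(3,4)] transp_facts(3)[OF assms(1,2) assms(4)] by simp

lemma adj_gen:
  assumes a: "a \<in> cube n" and b: "b \<in> cube n" and k: "k \<in> {1..n}" and ab: "a k \<noteq> b k"
    and agree: "\<And>i. i \<noteq> k \<Longrightarrow> a i = b i"
  shows "Th n (restrict (transpose a b) (cube n)) \<in> BGens n"
proof -
  let ?\<tau> = "restrict (transpose a b) (cube n)"
  let ?\<alpha> = "Th n ?\<tau>"
  define h where "h = hpol k a n"
  have hG: "h \<in> Gset n" unfolding h_def by (rule hpol_G[OF k])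
  have hB: "Bproj h \<in> Bcarrier n" by (rule Bproj_closed[OF vin_Gset[OF hG]])
  have aut: "?\<alpha> \<in> carrier (BAut n)" by (rule Th_aut[OF transp_facts(1)[OF a b]])
  have bk: "b k = 1 - a k" using cube_01[OF a k] cube_01[OF b k] ab by auto
  have pevX: "pev Bs h = (\<Prod>i\<in>{1..n}. if i = k then 1 else pev Bs (lit k a i))" for Bs
    unfolding h_def pev_hpol by (rule prod.cong) (auto simp: pev_lit_k)
  have Hv: "ev n (Bproj h) v = (if v = a \<or> v = b then 1 else 0)" if v: "v \<in> cube n" for v
  proof -
    have "ev n (Bproj h) v = (\<Prod>i\<in>{1..n}. if i = k \<or> v i = a i then 1 else 0)"
      unfolding ev_Bproj[OF v] pevX
    proof (rule prod.cong)
      fix i assume i: "i \<in> {1..n}"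
      show "(if i = k then 1 else pev (setv n v) (lit k a i)) = (if i = k \<or> v i = a i then 1 else 0)"
      proof (cases "i = k")
        case False
        have "v i = (if i \<in> setv n v then 1 else 0)" by (rule cube_val[OF v i])
        then show ?thesis using False pev_lit[OF False] cube_01[OF a i] by auto
      qed simp
    qed simp
    also have "\<dots> = (if \<forall>i\<in>{1..n}. i = k \<or> v i = a i then 1 else 0)" by (simp add: prod_indicator)
    also have "(\<forall>i\<in>{1..n}. i = k \<or> v i = a i) \<longleftrightarrow> (v = a \<or> v = b)"
    proof
      assume H: "\<forall>i\<in>{1..n}. i = k \<or> v i = a i"
      show "v = a \<or> v = b"
      proof (cases "v k = a k")
        case True
        then have "v = a" using H by (intro cube_ext[OF v a]) auto
        then show ?thesis by simp
      next
        case False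
        then have "v k = b k" using cube_01[OF v k] cube_01[OF a k] bk by auto
        then have "v = b" using H agree by (intro cube_ext[OF v b]) (metis)
        then show ?thesis by simp
      qed
    next
      assume "v = a \<or> v = b"
      then show "\<forall>i\<in>{1..n}. i = k \<or> v i = a i" using agree by auto
    qed
    finally show ?thesis .
  qed
  have indep: "Bindep k (Bproj h)"
  proof -
    have "Bindep k (mob n (ev n (Bproj h)))"
    proof (rule mob_indep[OF k])
      fix A assume A: "A \<subseteq> {1..n}"
      have A1: "insert k A \<subseteq> {1..n}" using A k by auto
      have A2: "A - {k} \<subseteq> {1..n}" using A by auto
      have "ev n (Bproj h) (pt n (insert k A)) = pev (insert k A) h"
        using ev_Bproj[OF pt_cube] setv_pt[OF A1] by simp
      also have "\<dots> = pev (A - {k}) h" unfolding pevX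
      proof (rule prod.cong)
        fix i assume "i \<in> {1..n}"
        show "(if i = k then 1 else pev (insert k A) (lit k a i)) = (if i = k then 1 else pev (A - {k}) (lit k a i))"
          by (cases "i = k") (simp_all add: pev_lit)
      qed simp
      also have "\<dots> = ev n (Bproj h) (pt n (A - {k}))"
        using ev_Bproj[OF pt_cube] setv_pt[OF A2] by simp
      finally show "ev n (Bproj h) (pt n (insert k A)) = ev n (Bproj h) (pt n (A - {k}))" .
    qed
    then show ?thesis using mob_ev[OF hB] by simp
  qed
  have Bk: "Bvar k \<in> Bcarrier n" by (rule Bvar_closed[OF k])
  have rhsB: "(\<lambda>S. Bvar k S + Bproj h S - 2 * Bmult (Bvar k) (Bproj h) S) \<in> Bcarrier n"
    using Bk hB Bmult_closed[OF Bk hB] unfolding Bcarrier_iff by simp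
  have tr_im: "transpose a b v \<in> cube n" if "v \<in> cube n" for v by (rule transp_facts(2)[OF a b that])
  have main: "?\<alpha> (Bvar k) = (\<lambda>S. Bvar k S + Bproj h S - 2 * Bmult (Bvar k) (Bproj h) S)"
  proof (rule ev_inj[where n=n])
    show "?\<alpha> (Bvar k) \<in> Bcarrier n" using BAut_E(1)[OF aut] Bk by blast
    show "(\<lambda>S. Bvar k S + Bproj h S - 2 * Bmult (Bvar k) (Bproj h) S) \<in> Bcarrier n" by (rule rhsB)
    fix v assume v: "v \<in> cube n"
    have L: "ev n (?\<alpha> (Bvar k)) v = transpose a b v k"
      using ev_Th_transp[OF a b Bk v] ev_Bvar[OF tr_im[OF v] k] by simp
    have R: "ev n (\<lambda>S. Bvar k S + Bproj h S - 2 * Bmult (Bvar k) (Bproj h) S) v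
        = v k + (if v = a \<or> v = b then 1 else 0) - 2 * (v k * (if v = a \<or> v = b then 1 else 0))"
      unfolding ev_lin ev_Bmult ev_Bvar[OF v k] Hv[OF v] by simp
    show "ev n (?\<alpha> (Bvar k)) v = ev n (\<lambda>S. Bvar k S + Bproj h S - 2 * Bmult (Bvar k) (Bproj h) S) v"
      unfolding L R
    proof (cases "v = a")
      case True then show "transpose a b v k = v k + (if v = a \<or> v = b then 1 else 0) - 2 * (v k * (if v = a \<or> v = b then 1 else 0))"
        using bk by simp
    next
      case False
      show "transpose a b v k = v k + (if v = a \<or> v = b then 1 else 0) - 2 * (v k * (if v = a \<or> v = b then 1 else 0))"
      proof (cases "v = b")
        case True then show ?thesis using bk by simp
      next
        case False2: False
        then show ?thesis using False by simp
      qed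
    qed
  qed
  have others: "?\<alpha> (Bvar i) = Bvar i" if i: "i \<in> {1..n}" "i \<noteq> k" for i
  proof (rule ev_inj[where n=n])
    have Bi: "Bvar i \<in> Bcarrier n" by (rule Bvar_closed[OF i(1)])
    then show "?\<alpha> (Bvar i) \<in> Bcarrier n" using BAut_E(1)[OF aut] by blast
    show "Bvar i \<in> Bcarrier n" by (rule Bi)
    fix v assume v: "v \<in> cube n"
    have "ev n (?\<alpha> (Bvar i)) v = transpose a b v i"
      using ev_Th_transp[OF a b Bi v] ev_Bvar[OF tr_im[OF v] i(1)] by simp
    also have "\<dots> = v i" using agree[OF i(2)] by (cases "v = a"; cases "v = b") simp_all
    also have "\<dots> = ev n (Bvar i) v" using ev_Bvar[OF v i(1)] by simp
    finally show "ev n (?\<alpha> (Bvar i)) v = ev n (Bvar i) v" .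
  qed
  show ?thesis unfolding BGens_def
    using aut k hG indep main others by blast
qed



abbreviation GG :: "nat \<Rightarrow> ((nat set \<Rightarrow> int) \<Rightarrow> (nat set \<Rightarrow> int)) set" where
  "GG n \<equiv> generate (BAut n) (BGens n)"

lemma Th_mult_BAut:
  assumes "g \<in> Bij (cube n)" "h \<in> Bij (cube n)"
  shows "Th n (compose (cube n) g h) = Th n g \<otimes>\<^bsub>BAut n\<^esub> Th n h"
proof -
  have "Th n g \<in> Bij (Bcarrier n)" "Th n h \<in> Bij (Bcarrier n)"
    using Th_aut[OF assms(1)] Th_aut[OF assms(2)] BAut_sub_Bij by blast+
  then show ?thesis using Th_mult[OF assms] by (simp add: mult_BAut)
qed

lemma restrict_comp:
  assumes "\<And>v. v \<in> S \<Longrightarrow> g v \<in> S"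
  shows "restrict (f \<circ> g) S = compose S (restrict f S) (restrict g S)"
  using assms by (auto simp: compose_def)

lemma Th_one: "Th n (\<lambda>x\<in>cube n. x) = \<one>\<^bsub>BAut n\<^esub>"
  by (simp add: Th_id one_BAut)

lemma transp_in_GG:
  assumes b: "b \<in> cube n"
  shows "\<forall>a\<in>cube n. card {i\<in>{1..n}. a i \<noteq> b i} = d \<longrightarrow> Th n (restrict (transpose a b) (cube n)) \<in> GG n"
proof (induction d)
  case 0
  show ?case
  proof (intro ballI impI)
    fix a assume a: "a \<in> cube n" and c: "card {i\<in>{1..n}. a i \<noteq> b i} = 0"
    then have "{i\<in>{1..n}. a i \<noteq> b i} = {}" by simp
    then have "a = b" by (intro cube_ext[OF a b]) blast
    then have "restrict (transpose a b) (cube n) = (\<lambda>x\<in>cube n. x)" by (simp add: restrict_def id_def)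
    then show "Th n (restrict (transpose a b) (cube n)) \<in> GG n" using Th_one generate.one by metis
  qed
next
  case (Suc d)
  show ?case
  proof (intro ballI impI)
    fix a assume a: "a \<in> cube n" and c: "card {i\<in>{1..n}. a i \<noteq> b i} = Suc d"
    let ?D = "{i\<in>{1..n}. a i \<noteq> b i}"
    have "?D \<noteq> {}"
    proof
      assume "?D = {}"
      then have "card ?D = 0" by simp
      with c show False by simp
    qed
    then obtain k where kD: "k \<in> ?D" by blast
    then have k: "k \<in> {1..n}" and akb: "a k \<noteq> b k" by auto
    define c' where "c' = a(k := b k)"
    have c'C: "c' \<in> cube n" unfolding c'_def using a b k cube_01[OF b k] unfolding cube_iff by auto
    have Dc: "{i\<in>{1..n}. c' i \<noteq> b i} = ?D - {k}" unfolding c'_def by auto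
    have cardc: "card {i\<in>{1..n}. c' i \<noteq> b i} = d" unfolding Dc using c kD by simp
    have adj: "Th n (restrict (transpose a c') (cube n)) \<in> BGens n"
      by (rule adj_gen[OF a c'C k]) (auto simp: c'_def akb)
    show "Th n (restrict (transpose a b) (cube n)) \<in> GG n"
    proof (cases "c' = b")
      case True
      then show ?thesis using adj generate.incl by metis
    next
      case False
      have IH: "Th n (restrict (transpose c' b) (cube n)) \<in> GG n" using Suc.IH c'C cardc by blast
      have ac: "a \<noteq> c'" using akb unfolding c'_def by (metis fun_upd_same)
      have ab: "a \<noteq> b" using akb by auto
      have tr: "transpose a b = transpose a c' \<circ> transpose c' b \<circ> transpose a c'"
        using transpose_comp_triple[of a b c'] ab False by (metis transpose_comp_triple)
      have im1: "\<And>v. v \<in> cube n \<Longrightarrow> transpose a c' v \<in> cube n" by (rule transp_facts(2)[OF a c'C])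
      have im2: "\<And>v. v \<in> cube n \<Longrightarrow> transpose c' b v \<in> cube n" by (rule transp_facts(2)[OF c'C b])
      have B1: "restrict (transpose a c') (cube n) \<in> Bij (cube n)" by (rule transp_facts(1)[OF a c'C])
      have B2: "restrict (transpose c' b) (cube n) \<in> Bij (cube n)" by (rule transp_facts(1)[OF c'C b])
      have im12: "\<And>v. v \<in> cube n \<Longrightarrow> (transpose a c' \<circ> transpose c' b) v \<in> cube n" using im1 im2 by simp
      have "restrict (transpose a b) (cube n) =
          compose (cube n) (restrict (transpose a c' \<circ> transpose c' b) (cube n)) (restrict (transpose a c') (cube n))"
        unfolding tr by (rule restrict_comp[OF im1])
      also have "restrict (transpose a c' \<circ> transpose c' b) (cube n) =
          compose (cube n) (restrict (transpose a c') (cube n)) (restrict (transpose c' b) (cube n))"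
        by (rule restrict_comp[OF im2])
      finally have eq: "restrict (transpose a b) (cube n) = compose (cube n)
          (compose (cube n) (restrict (transpose a c') (cube n)) (restrict (transpose c' b) (cube n)))
          (restrict (transpose a c') (cube n))" .
      have "Th n (restrict (transpose a b) (cube n)) =
          (Th n (restrict (transpose a c') (cube n)) \<otimes>\<^bsub>BAut n\<^esub> Th n (restrict (transpose c' b) (cube n)))
          \<otimes>\<^bsub>BAut n\<^esub> Th n (restrict (transpose a c') (cube n))"
        unfolding eq using Th_mult_BAut[OF compose_Bij[OF B1 B2] B1] Th_mult_BAut[OF B1 B2] by simp
      moreover have "Th n (restrict (transpose a c') (cube n)) \<in> GG n" using adj generate.incl by metis
      ultimately show ?thesis using IH generate.eng by metis
    qed
  qed
qed

lemma perm_in_GG: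
  assumes p: "p permutes cube n"
  shows "Th n (restrict p (cube n)) \<in> GG n"
  using p finite_cube
proof (induction p rule: permutes_induct)
  case id
  have "restrict id (cube n) = (\<lambda>x\<in>cube n. x)" by (simp add: restrict_def id_def)
  then show ?case using Th_one generate.one by metis
next
  case (swap a b p)
  have pim: "\<And>v. v \<in> cube n \<Longrightarrow> p v \<in> cube n" using permutes_in_image[OF swap.hyps(4)] by blast
  have Bp: "restrict p (cube n) \<in> Bij (cube n)"
    unfolding Bij_def using iffD2[OF bij_betw_cong permutes_imp_bij[OF swap.hyps(4)]] by simp
  have Bt: "restrict (transpose a b) (cube n) \<in> Bij (cube n)" by (rule transp_facts(1)[OF swap.hyps(1,2)])
  have "Th n (restrict (transpose a b \<circ> p) (cube n)) =
      Th n (restrict (transpose a b) (cube n)) \<otimes>\<^bsub>BAut n\<^esub> Th n (restrict p (cube n))"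
  proof -
    have eqc: "restrict (transpose a b \<circ> p) (cube n) = compose (cube n) (restrict (transpose a b) (cube n)) (restrict p (cube n))"
      by (rule restrict_comp[OF pim])
    show ?thesis unfolding eqc by (rule Th_mult_BAut[OF Bt Bp])
  qed
  moreover have "Th n (restrict (transpose a b) (cube n)) \<in> GG n"
    using transp_in_GG[OF swap.hyps(2)] swap.hyps(1) by blast
  ultimately show ?case using swap.IH generate.eng by metis
qed

lemma gen_all: "GG n = carrier (BAut n)"
proof
  show "GG n \<subseteq> carrier (BAut n)"
    by (rule group.generate_incl[OF group_BAut]) (auto simp: BGens_def)
  show "carrier (BAut n) \<subseteq> GG n"
  proof
    fix x assume "x \<in> carrier (BAut n)"
    then obtain g where g: "g \<in> Bij (cube n)" "Th n g = x" using Th_surj by blast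
    define p where "p = (\<lambda>v. if v \<in> cube n then g v else v)"
    have gb: "bij_betw g (cube n) (cube n)" using g Bij_bij by blast
    have pp: "p permutes cube n"
      by (rule bij_imp_permutes) (use gb in \<open>auto simp: p_def intro: iffD2[OF bij_betw_cong gb]\<close>)
    have "restrict p (cube n) = g"
      using Bij_imp_extensional[OF g(1)] unfolding p_def by (auto simp: extensional_def)
    then show "x \<in> GG n" using perm_in_GG[OF pp] g by simp
  qed
qed

theorem proposition1:
  fixes n :: nat
  shows "generate (BAut n) (BGens n) = carrier (BAut n) \<and> BAut n \<cong> BijGroup (cube n)"
  using gen_all BAut_iso by blast

end
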